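(* Let $n\geq p\geq 1$ and $k\geq 2$ be integers. Let $u$ be a length-$p$ word over $\Sigma_k$, let $b[1..p]$ be the border indicator of $u$ and let $a[1..p]$ be the unbordered prefix indicator of $u$. Then \[B_k(u,n) = \begin{cases} \sum\limits_{i=1}^{n-p}a[i]k^{n-p-i} + \sum\limits_{i=n-p+1}^{\lfloor n/2\rfloor} a[i]\,b[i-(n-p)], & \text{if } n \leq 2p;\\[2mm] \sum\limits_{i=1}^p a[i] k^{n-p-i} + \sum\limits_{i=p+1}^{\lfloor n/2\rfloor} \bigl(k^{i-p} - B_k(u,i)\bigr)k^{n-2i}, & \text{otherwise.} \end{cases}\]
   Context: $\Sigma_k=\{1,2,\ldots,k\}$. A border of a word $w$ is a word that is both a non-empty proper prefix and a non-empty proper suffix of $w$; $w$ is bordered if it has a border and unbordered otherwise. For a word $u$ and integer $m\ge |u|$, $B_k(u,m)$ denotes the number of length-$m$ bordered words over $\Sigma_k$ having $u$ as a prefix. For a word $u=u_1\cdots u_p$: its unbordered prefix indicator is the array $a[1..p]$ with $a[i]=1$ if $u_1\cdots u_i$ is unbordered and $a[i]=0$ otherwise; its border indicator is the array $b[1..p]$ with $b[i]=1$ if $u$ has a border of length $i$ and $b[i]=0$ otherwise. *)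

theory Defs
  imports Main
begin

definition bordered :: "nat list \<Rightarrow> bool" where
  "bordered w \<longleftrightarrow> (\<exists>l. 0 < l \<and> l < length w \<and> take l w = drop (length w - l) w)"

definition Bk :: "nat \<Rightarrow> nat list \<Rightarrow> nat \<Rightarrow> nat" where
  "Bk k u m = card {w. length w = m \<and> set w \<subseteq> {1..k} \<and> take (length u) w = u \<and> bordered w}"

text \<open>Unbordered prefix indicator a[i] (1-based, i = 1..length u).\<close>
definition unb_ind :: "nat list \<Rightarrow> nat \<Rightarrow> nat" where
  "unb_ind u i = (if bordered (take i u) then 0 else 1)"

definition border_ind :: "nat list \<Rightarrow> nat \<Rightarrow> nat" where
  "border_ind u i = (if 0 < i \<and> i < length u \<and> take i u = drop (length u - i) u then 1 else 0)"

end

theory Submission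
  imports Defs
begin


definition Pb :: "nat \<Rightarrow> nat list \<Rightarrow> bool" where
  "Pb i w \<longleftrightarrow> \<not> bordered (take i w) \<and> take i w = drop (length w - i) w"

lemma min_border_unb:
  assumes "bordered w"
  shows "\<exists>l. 0 < l \<and> 2 * l \<le> length w \<and> Pb l w"
proof -
  define n where "n = length w"
  let ?B = "\<lambda>l. 0 < l \<and> l < n \<and> take l w = drop (n - l) w"
  have ex: "\<exists>l. ?B l" using assms unfolding bordered_def n_def by blast
  define l where "l = (LEAST l. ?B l)"
  have Bl: "?B l" unfolding l_def by (rule LeastI_ex[OF ex])
  have minl: "\<And>l'. l' < l \<Longrightarrow> \<not> ?B l'" unfolding l_def using not_less_Least by blast
  have unb: "\<not> bordered (take l w)"
  proof
    assume "bordered (take l w)"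
    then obtain l' where l': "0 < l'" "l' < length (take l w)" "take l' (take l w) = drop (length (take l w) - l') (take l w)"
      unfolding bordered_def by blast
    have ll: "length (take l w) = l" using Bl n_def by simp
    note l' = l'[unfolded ll]
    have "take l' w = take l' (take l w)" using l' by simp
    also have "\<dots> = drop (l - l') (take l w)" using l' by simp
    also have "\<dots> = drop (l - l') (drop (n - l) w)" using Bl by simp
    also have "\<dots> = drop (n - l') w" using l' Bl by (simp add: add.commute)
    finally have "?B l'" using l' Bl by simp
    with minl l' show False by blast
  qed
  have "2 * l \<le> n"
  proof (rule ccontr)
    assume h: "\<not> 2 * l \<le> n"
    have "drop (n - l) (take l w) = take (2*l - n) (drop (n - l) w)"
      by (simp add: drop_take) (metis Nat.diff_diff_right mult_2 diff_add_inverse2 Bl less_imp_le)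
    also have "\<dots> = take (2*l - n) (take l w)" using Bl by simp
    finally have "bordered (take l w)" unfolding bordered_def using h Bl
      apply (rule_tac x="2*l-n" in exI) by (auto simp: min_def n_def[symmetric])
    with unb show False by simp
  qed
  then show ?thesis using Bl unb unfolding Pb_def n_def by blast
qed

lemma Pb_bordered:
  assumes "0 < i" "2 * i \<le> length w" "Pb i w" shows "bordered w"
  using assms unfolding Pb_def bordered_def by (rule_tac x=i in exI) auto

lemma Pb_unique:
  assumes "i < j" "j \<le> length w" "Pb i w" "Pb j w" "0 < i" shows False
proof -
  let ?n = "length w"
  have "take i (take j w) = take i w" using assms by simp
  also have "\<dots> = drop (?n - i) w" using assms(3) unfolding Pb_def by simp
  also have "\<dots> = drop (j - i) (drop (?n - j) w)" using assms by simp
  also have "\<dots> = drop (j - i) (take j w)" using assms(4) unfolding Pb_def by simp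
  finally have "bordered (take j w)" unfolding bordered_def using assms
    by (rule_tac x=i in exI) (auto simp: min_def)
  with assms(4) show False unfolding Pb_def by simp
qed


definition Wd :: "nat \<Rightarrow> nat list \<Rightarrow> nat \<Rightarrow> nat list set" where
  "Wd k u n = {w. length w = n \<and> set w \<subseteq> {1..k} \<and> take (length u) w = u}"

definition Sd :: "nat \<Rightarrow> nat list \<Rightarrow> nat \<Rightarrow> nat \<Rightarrow> nat list set" where
  "Sd k u n i = {w \<in> Wd k u n. Pb i w}"

lemma finite_Wd: "finite (Wd k u n)"
proof -
  have "Wd k u n \<subseteq> {xs. set xs \<subseteq> {1..k} \<and> length xs = n}" unfolding Wd_def by auto
  then show ?thesis using finite_subset finite_lists_length_eq[of "{1..k}" n] by auto
qed

lemma Bk_decomp: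
  "Bk k u n = (\<Sum>i\<in>{1..n div 2}. card (Sd k u n i))"
proof -
  have eq: "{w. length w = n \<and> set w \<subseteq> {1..k} \<and> take (length u) w = u \<and> bordered w}
      = (\<Union>i\<in>{1..n div 2}. Sd k u n i)"
  proof (rule set_eqI, rule iffI)
    fix w assume w: "w \<in> {w. length w = n \<and> set w \<subseteq> {1..k} \<and> take (length u) w = u \<and> bordered w}"
    then obtain l where "0 < l" "2 * l \<le> length w" "Pb l w" using min_border_unb by blast
    then show "w \<in> (\<Union>i\<in>{1..n div 2}. Sd k u n i)" using w unfolding Sd_def Wd_def
      by (auto intro!: bexI[of _ l])
  next
    fix w assume "w \<in> (\<Union>i\<in>{1..n div 2}. Sd k u n i)"
    then obtain i where "i \<in> {1..n div 2}" "w \<in> Sd k u n i" by blast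
    then show "w \<in> {w. length w = n \<and> set w \<subseteq> {1..k} \<and> take (length u) w = u \<and> bordered w}"
      unfolding Sd_def Wd_def using Pb_bordered[of i w] by auto
  qed
  have "card (\<Union>i\<in>{1..n div 2}. Sd k u n i) = (\<Sum>i\<in>{1..n div 2}. card (Sd k u n i))"
  proof (rule card_UN_disjoint)
    show "\<forall>i\<in>{1..n div 2}. finite (Sd k u n i)" unfolding Sd_def using finite_Wd by auto
    show "\<forall>i\<in>{1..n div 2}. \<forall>j\<in>{1..n div 2}. i \<noteq> j \<longrightarrow> Sd k u n i \<inter> Sd k u n j = {}"
    proof (intro ballI impI)
      fix i j assume ij: "i \<in> {1..n div 2}" "j \<in> {1..n div 2}" "i \<noteq> j"
      show "Sd k u n i \<inter> Sd k u n j = {}"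
      proof (rule ccontr)
        assume "Sd k u n i \<inter> Sd k u n j \<noteq> {}"
        then obtain w where w: "w \<in> Sd k u n i" "w \<in> Sd k u n j" by blast
        then have len: "length w = n" "Pb i w" "Pb j w" unfolding Sd_def Wd_def by auto
        show False
        proof (cases "i < j")
          case True then show False using Pb_unique[of i j w] len ij by fastforce
        next
          case False then have "j < i" using ij by simp
          then show False using Pb_unique[of j i w] len ij by fastforce
        qed
      qed
    qed
  qed simp
  then show ?thesis unfolding Bk_def eq .
qed


lemma take_i_Wd: "w \<in> Wd k u n \<Longrightarrow> i \<le> length u \<Longrightarrow> take i w = take i u"
proof -
  assume a: "w \<in> Wd k u n" "i \<le> length u"
  have h: "take i w = take i (take (length u) w)" using a(2) by (simp add: min_def)
  have "take (length u) w = u" using a(1) unfolding Wd_def by simp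
  then show ?thesis using h by simp
qed

lemma card_Sa:
  assumes "set u \<subseteq> {1..k}" "1 \<le> i" "i \<le> length u" "i + length u \<le> n"
  shows "card (Sd k u n i) = unb_ind u i * k ^ (n - length u - i)"
proof (cases "bordered (take i u)")
  case True
  then have "Sd k u n i = {}" unfolding Sd_def Pb_def using take_i_Wd assms by auto
  then show ?thesis using True unfolding unb_ind_def by simp
next
  case False
  let ?p = "length u"
  let ?M = "{m. set m \<subseteq> {1..k} \<and> length m = n - ?p - i}"
  have eq: "Sd k u n i = (\<lambda>m. u @ m @ take i u) ` ?M"
  proof (rule set_eqI, rule iffI)
    fix w assume w: "w \<in> Sd k u n i"
    then have wW: "w \<in> Wd k u n" and P: "Pb i w" unfolding Sd_def by auto
    have len: "length w = n" and sw: "set w \<subseteq> {1..k}" and tp: "take ?p w = u" using wW unfolding Wd_def by auto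
    have ti: "take i w = take i u" using take_i_Wd[OF wW] assms by simp
    define m where "m = take (n - ?p - i) (drop ?p w)"
    have d: "drop (n - ?p - i) (drop ?p w) = take i u"
    proof -
      have "drop (n - ?p - i) (drop ?p w) = drop (n - i) w" using assms by (simp add: add.commute)
      also have "\<dots> = take i w" using P len unfolding Pb_def by simp
      finally show ?thesis using ti by simp
    qed
    have e1: "drop ?p w = m @ take i u" unfolding m_def using d
      by (metis append_take_drop_id)
    have "w = u @ m @ take i u" using tp e1 append_take_drop_id[of ?p w] by simp
    moreover have "length m = n - ?p - i" unfolding m_def using len assms by simp
    moreover have "set m \<subseteq> {1..k}" unfolding m_def using sw
      by (meson order_trans set_drop_subset set_take_subset)
    ultimately show "w \<in> (\<lambda>m. u @ m @ take i u) ` ?M" by blast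
  next
    fix w assume "w \<in> (\<lambda>m. u @ m @ take i u) ` ?M"
    then obtain m where m: "m \<in> ?M" "w = u @ m @ take i u" by blast
    have "set (take i u) \<subseteq> {1..k}" using assms(1) by (meson order_trans set_take_subset)
    then have "w \<in> Wd k u n" using m assms unfolding Wd_def by auto
    moreover have "Pb i w"
    proof -
      have lw: "length w = n" using m assms by simp
      have "drop (length w - i) w = drop (length (u @ m)) ((u @ m) @ take i u)"
        using m assms lw by simp
      also have "\<dots> = take i u" by simp
      finally show ?thesis unfolding Pb_def using m assms False by simp
    qed
    ultimately show "w \<in> Sd k u n i" unfolding Sd_def by simp
  qed
  have "inj_on (\<lambda>m. u @ m @ take i u) ?M" by (rule inj_onI) simp
  then have "card (Sd k u n i) = card ?M" unfolding eq by (rule card_image)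
  also have "\<dots> = k ^ (n - ?p - i)" by (simp add: card_lists_length_eq)
  finally show ?thesis using False unfolding unb_ind_def by simp
qed


lemma card_Sb:
  assumes "set u \<subseteq> {1..k}" "1 \<le> i" "i \<le> length u" "n < i + length u" "2 * i \<le> n" "length u \<le> n"
  shows "card (Sd k u n i) = unb_ind u i * border_ind u (i - (n - length u))"
proof -
  let ?p = "length u"
  define j where "j = i - (n - ?p)"
  have j: "0 < j" "j < ?p" "?p - j = n - i" "j \<le> i" using assms unfolding j_def by auto
  have key: "Pb i w \<longleftrightarrow> \<not> bordered (take i u) \<and> take j u = drop (n - i) u \<and> drop ?p w = drop j (take i u)"
    if w: "w \<in> Wd k u n" for w
  proof -
    have len: "length w = n" and tp: "take ?p w = u" using w unfolding Wd_def by auto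
    have ti: "take i w = take i u" using take_i_Wd[OF w] assms by simp
    have wu: "w = u @ drop ?p w" using tp append_take_drop_id[of ?p w] by simp
    have "drop (n - i) w = drop (n - i) (u @ drop ?p w)" using wu by simp
    also have "\<dots> = drop (n - i) u @ drop ?p w" using assms by simp
    finally have dr: "drop (n - i) w = drop (n - i) u @ drop ?p w" .
    have tu: "take i u = take j u @ drop j (take i u)"
      using append_take_drop_id[of j "take i u"] j by (simp add: min_def)
    have "take i w = drop (n - i) w \<longleftrightarrow> take j u @ drop j (take i u) = drop (n - i) u @ drop ?p w"
      using ti dr tu by simp
    also have "\<dots> \<longleftrightarrow> take j u = drop (n - i) u \<and> drop j (take i u) = drop ?p w"
      using j assms by (intro append_eq_append_conv) auto
    finally show ?thesis unfolding Pb_def using len ti by auto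
  qed
  show ?thesis
  proof (cases "\<not> bordered (take i u) \<and> take j u = drop (n - i) u")
    case True
    let ?w = "u @ drop j (take i u)"
    have wW: "?w \<in> Wd k u n"
    proof -
      have "set (drop j (take i u)) \<subseteq> {1..k}" using assms(1)
        by (meson order_trans set_drop_subset set_take_subset)
      then show ?thesis unfolding Wd_def using assms j by auto
    qed
    have "Sd k u n i = {?w}"
    proof (rule set_eqI, rule iffI)
      fix w assume "w \<in> Sd k u n i"
      then have w: "w \<in> Wd k u n" "Pb i w" unfolding Sd_def by auto
      then have "drop ?p w = drop j (take i u)" using key by blast
      moreover have "take ?p w = u" using w unfolding Wd_def by simp
      ultimately show "w \<in> {?w}" using append_take_drop_id[of ?p w] by simp
    next
      fix w assume "w \<in> {?w}"
      then have "w = ?w" by simp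
      then show "w \<in> Sd k u n i" unfolding Sd_def using wW key[OF wW] True by simp
    qed
    moreover have "border_ind u j = 1" using True j unfolding border_ind_def by simp
    ultimately show ?thesis using True unfolding unb_ind_def j_def by simp
  next
    case False
    then have "Sd k u n i = {}" unfolding Sd_def using key by blast
    moreover have "unb_ind u i * border_ind u j = 0"
      using False j unfolding unb_ind_def border_ind_def by auto
    ultimately show ?thesis unfolding j_def by simp
  qed
qed


lemma card_Wd:
  assumes "set u \<subseteq> {1..k}" "length u \<le> i"
  shows "card (Wd k u i) = k ^ (i - length u)"
proof -
  let ?M = "{y. set y \<subseteq> {1..k} \<and> length y = i - length u}"
  have "Wd k u i = (\<lambda>y. u @ y) ` ?M"
  proof (rule set_eqI, rule iffI)
    fix w assume w: "w \<in> Wd k u i"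
    then have "w = u @ drop (length u) w" unfolding Wd_def using append_take_drop_id[of "length u" w] by simp
    moreover have "drop (length u) w \<in> ?M" using w unfolding Wd_def
      by (auto dest: in_set_dropD)
    ultimately show "w \<in> (\<lambda>y. u @ y) ` ?M" by blast
  next
    fix w assume "w \<in> (\<lambda>y. u @ y) ` ?M"
    then obtain y where y: "w = u @ y" "set y \<subseteq> {1..k}" "length y = i - length u" by blast
    have "set w \<subseteq> {1..k}" using y assms by simp
    then show "w \<in> Wd k u i" unfolding Wd_def using assms y by simp
  qed
  moreover have "inj_on (\<lambda>y. u @ y) ?M" by (rule inj_onI) simp
  ultimately show ?thesis by (simp add: card_image card_lists_length_eq)
qed

lemma card_Sc:
  assumes "set u \<subseteq> {1..k}" "length u < i" "2 * i \<le> n"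
  shows "Bk k u i \<le> k ^ (i - length u)"
    and "card (Sd k u n i) = (k ^ (i - length u) - Bk k u i) * k ^ (n - 2 * i)"
proof -
  let ?p = "length u"
  have BW: "Bk k u i = card {x \<in> Wd k u i. bordered x}" unfolding Bk_def Wd_def
    by (rule arg_cong[where f=card]) auto
  have fW: "finite (Wd k u i)" by (rule finite_Wd)
  have sub: "{x \<in> Wd k u i. bordered x} \<subseteq> Wd k u i" by auto
  show le: "Bk k u i \<le> k ^ (i - ?p)" unfolding BW card_Wd[OF assms(1) less_imp_le[OF assms(2)], symmetric]
    using fW sub by (rule card_mono)
  define X where "X = {x \<in> Wd k u i. \<not> bordered x}"
  have "X = Wd k u i - {x \<in> Wd k u i. bordered x}" unfolding X_def by auto
  then have cX: "card X = k ^ (i - ?p) - Bk k u i"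
    using card_Diff_subset[OF finite_subset[OF sub fW] sub] card_Wd[OF assms(1) less_imp_le[OF assms(2)]] BW by simp
  let ?M = "{m. set m \<subseteq> {1..k} \<and> length m = n - 2 * i}"
  let ?f = "\<lambda>(x, m). x @ m @ (x::nat list)"
  have eq: "Sd k u n i = ?f ` (X \<times> ?M)"
  proof (rule set_eqI, rule iffI)
    fix w assume "w \<in> Sd k u n i"
    then have w: "w \<in> Wd k u n" "Pb i w" unfolding Sd_def by auto
    have len: "length w = n" and sw: "set w \<subseteq> {1..k}" and tp: "take ?p w = u" using w unfolding Wd_def by auto
    define x where "x = take i w"
    define m where "m = take (n - 2 * i) (drop i w)"
    have dx: "drop (n - i) w = x" using w(2) len unfolding Pb_def x_def by simp
    have "drop (n - 2 * i) (drop i w) = drop (n - i) w" using assms by (simp add: add.commute)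
    then have e2: "drop i w = m @ x" unfolding m_def using dx append_take_drop_id[of "n - 2 * i" "drop i w"] by simp
    have ww: "w = x @ m @ x" unfolding x_def using e2 append_take_drop_id[of i w] x_def by simp
    have "take ?p x = take ?p w" unfolding x_def using assms by (simp add: min_def)
    moreover have "set x \<subseteq> {1..k}" using sw unfolding x_def by (meson order_trans set_take_subset)
    moreover have "\<not> bordered x" using w(2) unfolding Pb_def x_def by blast
    moreover have "length x = i" using len assms unfolding x_def by simp
    ultimately have "x \<in> X" unfolding X_def Wd_def using tp by simp
    moreover have "m \<in> ?M" unfolding m_def using sw len assms
      by (auto dest: in_set_takeD in_set_dropD)
    ultimately show "w \<in> ?f ` (X \<times> ?M)" using ww by force
  next
    fix w assume "w \<in> ?f ` (X \<times> ?M)"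
    then obtain x m where xm: "x \<in> X" "m \<in> ?M" "w = x @ m @ x" by auto
    have lx: "length x = i" and sx: "set x \<subseteq> {1..k}" and tx: "take ?p x = u" and ux: "\<not> bordered x"
      using xm(1) unfolding X_def Wd_def by auto
    have lw: "length w = n" using xm lx assms by simp
    have "take ?p w = u" using xm(3) tx lx assms by simp
    moreover have "set w \<subseteq> {1..k}" using xm sx by auto
    moreover have "Pb i w" unfolding Pb_def using xm(3) lx ux lw
      by (simp add: drop_append)
    ultimately show "w \<in> Sd k u n i" unfolding Sd_def Wd_def using lw by simp
  qed
  have inj: "inj_on ?f (X \<times> ?M)"
  proof (rule inj_onI)
    fix a b assume a: "a \<in> X \<times> ?M" and b: "b \<in> X \<times> ?M" and e: "?f a = ?f b"
    obtain x m where [simp]: "a = (x, m)" by (cases a)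
    obtain y l where [simp]: "b = (y, l)" by (cases b)
    have "length x = i" "length y = i" using a b unfolding X_def Wd_def by auto
    then have "x = y" "m @ x = l @ y" using e by (auto simp: append_eq_append_conv)
    then show "a = b" by simp
  qed
  have "card (Sd k u n i) = card (X \<times> ?M)" unfolding eq using inj by (rule card_image)
  also have "\<dots> = card X * k ^ (n - 2 * i)" by (simp add: card_cartesian_product card_lists_length_eq)
  finally show "card (Sd k u n i) = (k ^ (i - ?p) - Bk k u i) * k ^ (n - 2 * i)" using cX by simp
qed


theorem theorem5:
  fixes n p k :: nat and u :: "nat list"
  assumes "1 \<le> p" and "p \<le> n" and "2 \<le> k"
    and "length u = p" and "set u \<subseteq> {1..k}"
  shows "int (Bk k u n) =
    (if n \<le> 2 * p then
       (\<Sum>i = 1..n - p. int (unb_ind u i) * int k ^ (n - p - i))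
       + (\<Sum>i = n - p + 1..n div 2. int (unb_ind u i) * int (border_ind u (i - (n - p))))
     else
       (\<Sum>i = 1..p. int (unb_ind u i) * int k ^ (n - p - i))
       + (\<Sum>i = p + 1..n div 2. (int k ^ (i - p) - int (Bk k u i)) * int k ^ (n - 2 * i)))"
proof -
  have D: "int (Bk k u n) = (\<Sum>i\<in>{1..n div 2}. int (card (Sd k u n i)))"
    unfolding Bk_decomp[of k u n] by simp
  show ?thesis
  proof (cases "n \<le> 2 * p")
    case True
    have U: "{1..n div 2} = {1..n - p} \<union> {n - p + 1..n div 2}" using True by auto
    have "(\<Sum>i\<in>{1..n div 2}. int (card (Sd k u n i))) =
        (\<Sum>i\<in>{1..n - p}. int (card (Sd k u n i))) + (\<Sum>i\<in>{n - p + 1..n div 2}. int (card (Sd k u n i)))"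
      unfolding U by (rule sum.union_disjoint) auto
    also have "(\<Sum>i\<in>{1..n - p}. int (card (Sd k u n i))) = (\<Sum>i = 1..n - p. int (unb_ind u i) * int k ^ (n - p - i))"
    proof (rule sum.cong[OF refl])
      fix i assume "i \<in> {1..n - p}"
      then have "card (Sd k u n i) = unb_ind u i * k ^ (n - length u - i)"
        using True assms by (intro card_Sa) auto
      then show "int (card (Sd k u n i)) = int (unb_ind u i) * int k ^ (n - p - i)" using assms by simp
    qed
    also have "(\<Sum>i\<in>{n - p + 1..n div 2}. int (card (Sd k u n i))) = (\<Sum>i = n - p + 1..n div 2. int (unb_ind u i) * int (border_ind u (i - (n - p))))"
    proof (rule sum.cong[OF refl])
      fix i assume "i \<in> {n - p + 1..n div 2}"
      then have "card (Sd k u n i) = unb_ind u i * border_ind u (i - (n - length u))"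
        using True assms by (intro card_Sb) auto
      then show "int (card (Sd k u n i)) = int (unb_ind u i) * int (border_ind u (i - (n - p)))" using assms by simp
    qed
    finally show ?thesis using D True by simp
  next
    case False
    have U: "{1..n div 2} = {1..p} \<union> {p + 1..n div 2}" using False by auto
    have "(\<Sum>i\<in>{1..n div 2}. int (card (Sd k u n i))) =
        (\<Sum>i\<in>{1..p}. int (card (Sd k u n i))) + (\<Sum>i\<in>{p + 1..n div 2}. int (card (Sd k u n i)))"
      unfolding U by (rule sum.union_disjoint) auto
    also have "(\<Sum>i\<in>{1..p}. int (card (Sd k u n i))) = (\<Sum>i = 1..p. int (unb_ind u i) * int k ^ (n - p - i))"
    proof (rule sum.cong[OF refl])
      fix i assume "i \<in> {1..p}"
      then have "card (Sd k u n i) = unb_ind u i * k ^ (n - length u - i)"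
        using False assms by (intro card_Sa) auto
      then show "int (card (Sd k u n i)) = int (unb_ind u i) * int k ^ (n - p - i)" using assms by simp
    qed
    also have "(\<Sum>i\<in>{p + 1..n div 2}. int (card (Sd k u n i))) = (\<Sum>i = p + 1..n div 2. (int k ^ (i - p) - int (Bk k u i)) * int k ^ (n - 2 * i))"
    proof (rule sum.cong[OF refl])
      fix i assume i: "i \<in> {p + 1..n div 2}"
      have h1: "Bk k u i \<le> k ^ (i - length u)" using i assms by (intro card_Sc(1)) auto
      have h2: "card (Sd k u n i) = (k ^ (i - length u) - Bk k u i) * k ^ (n - 2 * i)"
        using i assms by (intro card_Sc(2)) auto
      show "int (card (Sd k u n i)) = (int k ^ (i - p) - int (Bk k u i)) * int k ^ (n - 2 * i)"
        using h1 h2 assms by (simp add: of_nat_diff)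
    qed
    finally show ?thesis using D False by simp
  qed
qed

end
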